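(* Let $p$ be an odd prime and let $F_{g\,\mathsf{ANY},\,h\,\mathsf{ANY}}(p)$ denote the number of pairs $(g,h)$ of integers with $1\le g\le p-1$, $1\le h\le p-1$ and $g^{h}\equiv h \pmod p$. Then \[ \left|F_{g\,\mathsf{ANY},\,h\,\mathsf{ANY}}(p)-(p-1)\right|\le d(p-1)\,\sigma(p-1)\,\sqrt{p}\,(1+\ln p). \]
   Context: $d(n)$ denotes the number of positive divisors of $n$, $\sigma(n)$ the sum of the positive divisors of $n$, and $\ln$ the natural logarithm. *)

theory Defs
  imports "HOL-Number_Theory.Number_Theory"
begin

definition num_divisors :: "nat \<Rightarrow> nat" where
  "num_divisors n = card {d. d dvd n \<and> 0 < d}"

definition sum_divisors :: "nat \<Rightarrow> nat" where
  "sum_divisors n = \<Sum> {d. d dvd n \<and> 0 < d}"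

definition F_any_any :: "nat \<Rightarrow> nat" where
  "F_any_any p = card {(g, h). g \<in> {1..p-1} \<and> h \<in> {1..p-1} \<and> [g ^ h = h] (mod p)}"

end

theory Submission
  imports Defs
begin

lemma roots_count:
  fixes p h c :: nat
  assumes p: "prime p" and h: "1 \<le> h" and c: "\<not> p dvd c"
  shows "card {g \<in> {1..p-1}. [g ^ h = c] (mod p)} \<le> gcd h (p - 1)"
proof (cases "{g \<in> {1..p-1}. [g ^ h = c] (mod p)} = {}")
  case True then show ?thesis by (simp only: True card.empty)
next
  case False
  let ?S = "{g \<in> {1..p-1}. [g ^ h = c] (mod p)}"
  let ?n = "p - 1"
  from False obtain g0 where g0: "g0 \<in> {1..p-1}" "[g0 ^ h = c] (mod p)" by blast
  have p2: "p \<ge> 2" using p prime_ge_2_nat by blast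
  have ndvd: "\<not> p dvd x" if "x \<in> {1..p-1}" for x
    using that by (auto dest: dvd_imp_le)
  have g0nd: "\<not> p dvd g0" using ndvd g0 by blast
  have ferm0: "[g0 ^ (p - 1) = 1] (mod p)" using fermat_theorem[OF p g0nd] .
  define f where "f g = (g * g0 ^ (p - 2)) mod p" for g
  have gpos: "0 < gcd h ?n" using h by simp
  have img: "f ` ?S \<subseteq> {x\<in>{..<p}. [x ^ gcd h ?n = 1] (mod p)}"
  proof
    fix u assume "u \<in> f ` ?S"
    then obtain g where g: "g \<in> ?S" and u: "u = f g" by blast
    have ulp: "u < p" using u p2 unfolding f_def by simp
    have gnd: "\<not> p dvd g" using ndvd g by blast
    have und: "\<not> p dvd u"
    proof
      assume "p dvd u"
      then have "p dvd g * g0 ^ (p - 2)" using u unfolding f_def by (simp add: dvd_mod_iff)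
      then have "p dvd g \<or> p dvd g0 ^ (p - 2)" using p prime_dvd_mult_iff by blast
      then show False using gnd g0nd p prime_dvd_power by blast
    qed
    have "[u ^ h = (g * g0 ^ (p - 2)) ^ h] (mod p)" unfolding u f_def
      by (simp add: cong_def power_mod)
    moreover have "(g * g0 ^ (p - 2)) ^ h = g ^ h * (g0 ^ h) ^ (p - 2)"
      by (simp add: power_mult_distrib flip: power_mult) (simp add: mult.commute)
    moreover have "[g ^ h * (g0 ^ h) ^ (p - 2) = c * c ^ (p - 2)] (mod p)"
      using g g0 by (intro cong_mult cong_pow) auto
    moreover have "c * c ^ (p - 2) = c ^ (p - 1)"
      using p2 by (metis Suc_diff_Suc Suc_1 less_le_trans lessI power_Suc numeral_2_eq_2 diff_Suc_eq_diff_pred)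
    moreover have "[c ^ (p - 1) = 1] (mod p)" using fermat_theorem[OF p c] .
    ultimately have uh: "[u ^ h = 1] (mod p)" by (metis cong_trans)
    have un: "[u ^ ?n = 1] (mod p)" using fermat_theorem[OF p und] .
    have "ord p u dvd h" "ord p u dvd ?n" using uh un ord_divides by blast+
    then have "ord p u dvd gcd h ?n" by simp
    then have "[u ^ gcd h ?n = 1] (mod p)" using ord_divides by blast
    then show "u \<in> {x\<in>{..<p}. [x ^ gcd h ?n = 1] (mod p)}" using ulp by simp
  qed
  have inj: "inj_on f ?S"
  proof
    fix a b assume a: "a \<in> ?S" and b: "b \<in> ?S" and e: "f a = f b"
    have "[a * g0 ^ (p - 2) = b * g0 ^ (p - 2)] (mod p)" using e unfolding f_def cong_def .
    then have "[a * g0 ^ (p - 2) * g0 = b * g0 ^ (p - 2) * g0] (mod p)" by (rule cong_mult) simp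
    moreover have "g0 ^ (p - 2) * g0 = g0 ^ (p - 1)"
      using p2 by (metis Suc_diff_Suc Suc_1 less_le_trans lessI power_Suc2 numeral_2_eq_2 diff_Suc_eq_diff_pred)
    ultimately have "[a * g0 ^ (p - 1) = b * g0 ^ (p - 1)] (mod p)" by (simp add: mult.assoc)
    moreover have "[a * g0 ^ (p - 1) = a * 1] (mod p)" "[b * g0 ^ (p - 1) = b * 1] (mod p)"
      using cong_mult[OF cong_refl[of a] ferm0] cong_mult[OF cong_refl[of b] ferm0] by auto
    ultimately have "[a = b] (mod p)" by (metis cong_sym cong_trans mult_1_right)
    then show "a = b" using a b p2 by (auto simp: cong_def)
  qed
  have "card ?S = card (f ` ?S)" using inj by (simp add: card_image)
  also have "\<dots> \<le> card {x\<in>{..<p}. [x ^ gcd h ?n = 1] (mod p)}"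
    by (rule card_mono[OF _ img]) simp
  also have "\<dots> \<le> gcd h ?n" using roots_mod_prime_bound[OF p gpos, of 1] by simp
  finally show ?thesis .
qed

lemma gcd_sum_bound:
  fixes n :: nat
  assumes n: "n > 0"
  shows "(\<Sum>h\<in>{1..n}. gcd h n) \<le> n * num_divisors n"
proof -
  let ?D = "{d. d dvd n \<and> 0 < d}"
  have fD: "finite ?D" using n by (auto intro: finite_subset[of _ "{..n}"] dest: dvd_imp_le)
  have "(\<Sum>h\<in>{1..n}. gcd h n) = (\<Sum>d\<in>?D. \<Sum>h\<in>{h\<in>{1..n}. gcd h n = d}. gcd h n)"
    by (rule sum.group[symmetric]) (use fD n in auto)
  also have "\<dots> \<le> (\<Sum>d\<in>?D. n)"
  proof (rule sum_mono)
    fix d assume d: "d \<in> ?D"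
    have "card {h\<in>{1..n}. gcd h n = d} \<le> card ((\<lambda>k. d * k) ` {1..n div d})"
    proof (rule card_mono)
      show "{h\<in>{1..n}. gcd h n = d} \<subseteq> (\<lambda>k. d * k) ` {1..n div d}"
      proof
        fix h assume hh: "h \<in> {h\<in>{1..n}. gcd h n = d}"
        then have "d dvd h" by auto
        then obtain k where k: "h = d * k" by blast
        have "k \<ge> 1" using hh k by (cases k) auto
        moreover have "d * k \<le> n" using hh k by auto
        then have "k \<le> n div d" using d by (metis div_le_mono nonzero_mult_div_cancel_left not_gr0 mem_Collect_eq)
        ultimately show "h \<in> (\<lambda>k. d * k) ` {1..n div d}" using k by auto
      qed
    qed simp
    also have "\<dots> \<le> n div d" using card_image_le[of "{1..n div d}" "\<lambda>k. d * k"] by simp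
    finally have "card {h\<in>{1..n}. gcd h n = d} \<le> n div d" .
    then have "d * card {h\<in>{1..n}. gcd h n = d} \<le> d * (n div d)" by simp
    also have "\<dots> \<le> n" by simp
    finally have "d * card {h\<in>{1..n}. gcd h n = d} \<le> n" .
    moreover have "(\<Sum>h\<in>{h\<in>{1..n}. gcd h n = d}. gcd h n) = d * card {h\<in>{1..n}. gcd h n = d}" by simp
    ultimately show "(\<Sum>h\<in>{h\<in>{1..n}. gcd h n = d}. gcd h n) \<le> n" by (simp add: mult.commute)
  qed
  also have "\<dots> = n * num_divisors n" unfolding num_divisors_def by simp
  finally show ?thesis .
qed

theorem mainTheorem1:
  fixes p :: nat
  assumes "prime p" and "odd p"
  shows "\<bar>real (F_any_any p) - real (p - 1)\<bar>
           \<le> real (num_divisors (p - 1)) * real (sum_divisors (p - 1)) * sqrt (real p) * (1 + ln (real p))"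
proof -
  have p: "prime p" using assms by simp
  have p2: "p \<ge> 2" using p prime_ge_2_nat by blast
  let ?n = "p - 1"
  let ?B = "\<lambda>h. {g \<in> {1..p-1}. [g ^ h = h] (mod p)}"
  have eq: "{(g, h). g \<in> {1..p-1} \<and> h \<in> {1..p-1} \<and> [g ^ h = h] (mod p)}
      = (\<lambda>(h, g). (g, h)) ` (SIGMA h:{1..p-1}. ?B h)" by auto
  have "F_any_any p = card (SIGMA h:{1..p-1}. ?B h)"
    unfolding F_any_any_def eq by (rule card_image) (auto simp: inj_on_def)
  also have "\<dots> = (\<Sum>h\<in>{1..p-1}. card (?B h))" by simp
  also have "\<dots> \<le> (\<Sum>h\<in>{1..p-1}. gcd h ?n)"
  proof (rule sum_mono)
    fix h assume h: "h \<in> {1..p-1}"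
    then have "\<not> p dvd h" by (auto dest: dvd_imp_le)
    then show "card (?B h) \<le> gcd h ?n" using roots_count[OF p _ ] h by auto
  qed
  also have "\<dots> \<le> ?n * num_divisors ?n" using gcd_sum_bound[of ?n] p2 by simp
  finally have F: "F_any_any p \<le> ?n * num_divisors ?n" .
  let ?D = "{d. d dvd ?n \<and> 0 < d}"
  have fD: "finite ?D" using p2 by (auto intro: finite_subset[of _ "{..?n}"] dest: dvd_imp_le)
  have "?n \<in> ?D" using p2 by auto
  then have nd: "num_divisors ?n \<ge> 1" unfolding num_divisors_def using fD
    by (metis One_nat_def Suc_leI card_gt_0_iff empty_iff)
  have sd: "sum_divisors ?n \<ge> ?n" unfolding sum_divisors_def
    using member_le_sum[OF \<open>?n \<in> ?D\<close> _ fD, of id] by simp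
  have Fr: "real (F_any_any p) \<le> real ?n * real (num_divisors ?n)" using F
    by (metis of_nat_le_iff of_nat_mult)
  have ndr: "real (num_divisors ?n) \<ge> 1" using nd by simp
  have lhs: "\<bar>real (F_any_any p) - real ?n\<bar> \<le> real ?n * real (num_divisors ?n)"
  proof -
    have "real ?n \<le> real ?n * real (num_divisors ?n)" using ndr
      by (metis mult_le_cancel_left1 of_nat_0_le_iff not_le order_less_le_trans zero_less_one_class.zero_le_one linorder_not_less)
    then show ?thesis using Fr by (auto simp: abs_if)
  qed
  have s1: "sqrt (real p) \<ge> 1" using p2 by simp
  have l1: "1 + ln (real p) \<ge> 1" using p2 by simp
  have "real ?n * real (num_divisors ?n) \<le> real (num_divisors ?n) * real (sum_divisors ?n)"
    using mult_right_mono[of "real ?n" "real (sum_divisors ?n)" "real (num_divisors ?n)"] sd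
    by (simp add: mult.commute)
  also have "\<dots> \<le> real (num_divisors ?n) * real (sum_divisors ?n) * sqrt (real p)"
    using mult_left_mono[OF s1, of "real (num_divisors ?n) * real (sum_divisors ?n)"] by simp
  also have "\<dots> \<le> real (num_divisors ?n) * real (sum_divisors ?n) * sqrt (real p) * (1 + ln (real p))"
    using mult_left_mono[OF l1, of "real (num_divisors ?n) * real (sum_divisors ?n) * sqrt (real p)"] by simp
  finally show ?thesis using lhs by linarith
qed

end
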